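(* Let $G_1$ and $G_2$ be two good trees of total degree $e$ (i.e. each has exactly $e$ vertices, each of degree $1$), each having $k$ marked points. Then $G_1$ and $G_2$ can be connected by a finite series of conic deformations: there are good trees $G_1=T_0,T_1,\dots,T_m=G_2$ such that $T_j$ and $T_{j+1}$ are connected by a conic deformation for each $j$.
   Context: A (dual) graph is a finite tree together with a non-negative integer $d_v$ (the degree) for each vertex $v$ and a list $\mathcal{L}$ of (not necessarily distinct) vertices called marked points; the number of times a vertex occurs in $\mathcal{L}$ is its multiplicity. The degree of a graph is $\sum_v d_v$. A good tree is such a graph with $d_v=1$ for all $v$. A subgraph $W$ of $G$ has $v(W)\subseteq v(G)$, $e(W)\subseteq e(G)$, marked points $\mathcal{L}(W)\subseteq\mathcal{L}(G)$ counted with multiplicity, and the same degrees. For a nonempty subgraph $H$ of $G$, the contraction $G_1$ of $G$ along $H$ has vertex set $(v(G)-v(H))\amalg\{v_H\}$; its edges are the edges of $G$ between vertices not in $H$ together with an edge from $v_H$ to each vertex outside $H$ joined in $G$ to a vertex of $H$; its marked points are the marked points of $G$ outside $H$ together with $v_H$ with multiplicity $|\mathcal{L}(H)|$; and $d_{v_H}=\sum_{v\in v(H)}d_v$, other degrees unchanged. If $G$ is a good tree and $G_1$ is obtained by contracting a subgraph of total degree two, $G_1$ is a conic deformation of $G$. Two good trees are connected by a conic deformation if there is a graph $K$ which is a conic deformation of both. *)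

theory Defs
  imports Main "HOL-Library.Multiset"
begin

text \<open>A (dual) graph: vertex set, undirected edges (2-element sets), degrees, and a
  multiset of marked points (vertices). Degrees outside the vertex set are irrelevant.\<close>
record 'a dgraph =
  verts :: "'a set"
  edges :: "'a set set"
  deg   :: "'a \<Rightarrow> nat"
  marks :: "'a multiset"

definition adj :: "'a dgraph \<Rightarrow> ('a \<times> 'a) set" where
  "adj G = {(u, v). {u, v} \<in> edges G}"

definition is_graph :: "'a dgraph \<Rightarrow> bool" where
  "is_graph G \<longleftrightarrow>
     finite (verts G) \<and> verts G \<noteq> {} \<and>
     (\<forall>e\<in>edges G. \<exists>u v. u \<noteq> v \<and> e = {u, v} \<and> u \<in> verts G \<and> v \<in> verts G) \<and>
     (\<forall>u\<in>verts G. \<forall>v\<in>verts G. (u, v) \<in> (adj G)\<^sup>*) \<and>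
     card (edges G) = card (verts G) - 1 \<and>
     set_mset (marks G) \<subseteq> verts G"

definition total_degree :: "'a dgraph \<Rightarrow> nat" where
  "total_degree G = (\<Sum>v\<in>verts G. deg G v)"

definition good_tree :: "'a dgraph \<Rightarrow> bool" where
  "good_tree G \<longleftrightarrow> is_graph G \<and> (\<forall>v\<in>verts G. deg G v = 1)"

definition subgraph :: "'a dgraph \<Rightarrow> 'a dgraph \<Rightarrow> bool" where
  "subgraph W G \<longleftrightarrow> is_graph W \<and> verts W \<subseteq> verts G \<and> edges W \<subseteq> edges G \<and>
     marks W \<subseteq># marks G \<and> (\<forall>v\<in>verts W. deg W v = deg G v)"

text \<open>Contraction of G along H, the new vertex v_H being named w
  (w must not be one of the surviving vertices).\<close>
definition contract :: "'a dgraph \<Rightarrow> 'a dgraph \<Rightarrow> 'a \<Rightarrow> 'a dgraph" where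
  "contract G H w =
    \<lparr> verts = (verts G - verts H) \<union> {w},
      edges = {e \<in> edges G. e \<inter> verts H = {}} \<union>
              {{w, u} | u. u \<in> verts G - verts H \<and> (\<exists>x\<in>verts H. {x, u} \<in> edges G)},
      deg = (\<lambda>v. if v = w then (\<Sum>x\<in>verts H. deg G x) else deg G v),
      marks = filter_mset (\<lambda>v. v \<notin> verts H) (marks G) + replicate_mset (size (marks H)) w \<rparr>"

definition dgraph_iso :: "'a dgraph \<Rightarrow> 'b dgraph \<Rightarrow> bool" where
  "dgraph_iso G K \<longleftrightarrow> (\<exists>f. bij_betw f (verts G) (verts K) \<and>
     (\<forall>u\<in>verts G. \<forall>v\<in>verts G. {u, v} \<in> edges G \<longleftrightarrow> {f u, f v} \<in> edges K) \<and>
     (\<forall>v\<in>verts G. deg K (f v) = deg G v) \<and>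
     marks K = image_mset f (marks G))"

definition conic_deformation :: "'a dgraph \<Rightarrow> 'a dgraph \<Rightarrow> bool" where
  "conic_deformation K G \<longleftrightarrow> good_tree G \<and>
     (\<exists>H w. subgraph H G \<and> total_degree H = 2 \<and>
        marks H = filter_mset (\<lambda>v. v \<in> verts H) (marks G) \<and>
        w \<notin> verts G - verts H \<and> dgraph_iso (contract G H w) K)"

definition connected_by_conic :: "'a dgraph \<Rightarrow> 'a dgraph \<Rightarrow> bool" where
  "connected_by_conic G1 G2 \<longleftrightarrow> (\<exists>K. conic_deformation K G1 \<and> conic_deformation K G2)"

end

theory Submission imports Defs begin

lemma adj_iff[simp]: "(u, v) \<in> adj G \<longleftrightarrow> {u, v} \<in> edges G"
  by (simp add: adj_def)

lemma graph_edge: "is_graph G \<Longrightarrow> {u, v} \<in> edges G \<Longrightarrow> u \<in> verts G \<and> v \<in> verts G \<and> u \<noteq> v"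
  unfolding is_graph_def by (metis doubleton_eq_iff)

lemma graph_edges_finite: "is_graph G \<Longrightarrow> finite (edges G)"
proof -
  assume g: "is_graph G"
  have E: "\<forall>e\<in>edges G. \<exists>u v. u \<noteq> v \<and> e = {u, v} \<and> u \<in> verts G \<and> v \<in> verts G"
    using g by (simp add: is_graph_def)
  have "edges G \<subseteq> Pow (verts G)"
  proof
    fix e assume "e \<in> edges G"
    then obtain u v where "e = {u,v}" "u \<in> verts G" "v \<in> verts G" using E by blast
    then show "e \<in> Pow (verts G)" by simp
  qed
  moreover have "finite (verts G)" using g by (simp add: is_graph_def)
  ultimately show ?thesis by (simp add: finite_subset)
qed

definition edgeH :: "'a dgraph \<Rightarrow> 'a \<Rightarrow> 'a \<Rightarrow> 'a dgraph" where
  "edgeH G c v = \<lparr>verts = {c, v}, edges = {{c, v}}, deg = deg G,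
      marks = filter_mset (\<lambda>z. z \<in> {c, v}) (marks G)\<rparr>"

lemma edgeH_conic:
  assumes "good_tree G" "{c, v} \<in> edges G"
  shows "conic_deformation (contract G (edgeH G c v) c) G"
proof -
  have g: "is_graph G" and d: "\<forall>x\<in>verts G. deg G x = 1" using assms(1) by (auto simp: good_tree_def)
  have cv: "c \<in> verts G" "v \<in> verts G" "c \<noteq> v" using graph_edge[OF g assms(2)] by auto
  have E: "verts (edgeH G c v) = {c,v}" "edges (edgeH G c v) = {{c,v}}"
    "marks (edgeH G c v) = filter_mset (\<lambda>z. z \<in> {c, v}) (marks G)"
    by (simp_all add: edgeH_def)
  have a1: "(c,v) \<in> (adj (edgeH G c v))\<^sup>*" "(v,c) \<in> (adj (edgeH G c v))\<^sup>*"
  proof -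
    have "(c,v) \<in> adj (edgeH G c v)" by (simp add: E)
    moreover have "(v,c) \<in> adj (edgeH G c v)" by (simp add: E insert_commute)
    ultimately show "(c,v) \<in> (adj (edgeH G c v))\<^sup>*" "(v,c) \<in> (adj (edgeH G c v))\<^sup>*" by auto
  qed
  have "\<forall>u\<in>verts (edgeH G c v). \<forall>w\<in>verts (edgeH G c v). (u, w) \<in> (adj (edgeH G c v))\<^sup>*"
    using a1 by (auto simp: E)
  then have "is_graph (edgeH G c v)"
    unfolding is_graph_def using cv by (auto simp: E)
  then have "subgraph (edgeH G c v) G"
    unfolding subgraph_def edgeH_def using cv assms(2) by (auto simp: multiset_filter_subset)
  moreover have "total_degree (edgeH G c v) = 2"
    using cv d by (simp add: total_degree_def edgeH_def)
  ultimately show ?thesis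
    unfolding conic_deformation_def using assms(1)
    apply (intro conjI exI[of _ "edgeH G c v"] exI[of _ c])
    apply (auto simp: edgeH_def dgraph_iso_def)
    done
qed

lemma conic_move:
  assumes "good_tree G" "good_tree G'" "{c, v} \<in> edges G" "{c, v} \<in> edges G'"
    and "contract G (edgeH G c v) c = contract G' (edgeH G' c v) c"
  shows "connected_by_conic G G'"
  unfolding connected_by_conic_def using edgeH_conic[OF assms(1,3)] edgeH_conic[OF assms(2,4)] assms(5)
  by auto

lemma rtrancl_cross: "(a,b) \<in> r\<^sup>* \<Longrightarrow> P a \<Longrightarrow> \<not> P b \<Longrightarrow> \<exists>x y. (x,y) \<in> r \<and> P x \<and> \<not> P y"
  by (induction rule: rtrancl_induct) auto

lemma adj_transfer:
  assumes "\<And>a b. {a,b} \<in> edges G \<Longrightarrow> (a,b) \<in> (adj G')\<^sup>*"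
  shows "(u,w) \<in> (adj G)\<^sup>* \<Longrightarrow> (u,w) \<in> (adj G')\<^sup>*"
  by (induction rule: rtrancl_induct) (auto dest: assms intro: rtrancl_trans)

definition smove :: "'a dgraph \<Rightarrow> 'a \<Rightarrow> 'a \<Rightarrow> 'a \<Rightarrow> 'a dgraph" where
  "smove G c v y = G\<lparr>edges := insert {c,y} (edges G - {{v,y}})\<rparr>"

lemma smove_good:
  assumes g: "good_tree G" and cv: "{c,v} \<in> edges G" and vy: "{v,y} \<in> edges G"
    and yc: "y \<noteq> c" and ncy: "{c,y} \<notin> edges G"
  shows "good_tree (smove G c v y)"
proof -
  have ig: "is_graph G" using g by (simp add: good_tree_def)
  have c: "c \<in> verts G" "c \<noteq> v" "v \<in> verts G" using graph_edge[OF ig cv] by auto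
  have y: "y \<in> verts G" "v \<noteq> y" using graph_edge[OF ig vy] by auto
  have ne: "{c,v} \<noteq> {v,y}" using yc c by (metis doubleton_eq_iff)
  have fin: "finite (edges G)" using graph_edges_finite[OF ig] .
  have tr: "(a,b) \<in> (adj (smove G c v y))\<^sup>*" if "{a,b} \<in> edges G" for a b
  proof (cases "{a,b} = {v,y}")
    case True
    have 1: "(v,c) \<in> adj (smove G c v y)" using cv ne by (auto simp: smove_def insert_commute)
    have 2: "(c,y) \<in> adj (smove G c v y)" by (auto simp: smove_def)
    have 3: "(y,c) \<in> adj (smove G c v y)" by (auto simp: smove_def insert_commute)
    have 4: "(c,v) \<in> adj (smove G c v y)" using cv ne by (auto simp: smove_def)
    have "(v,y) \<in> (adj (smove G c v y))\<^sup>*" "(y,v) \<in> (adj (smove G c v y))\<^sup>*"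
      using converse_rtrancl_into_rtrancl[OF 1 r_into_rtrancl[OF 2]]
        converse_rtrancl_into_rtrancl[OF 3 r_into_rtrancl[OF 4]] by auto
    then show ?thesis using True by (auto simp: doubleton_eq_iff)
  next
    case False
    then show ?thesis using that by (auto simp: smove_def intro!: r_into_rtrancl)
  qed
  have "card (edges (smove G c v y)) = card (edges G)"
    using fin vy ncy by (simp add: smove_def card_insert_if) (metis Suc_pred card_gt_0_iff emptyE)
  have V: "verts (smove G c v y) = verts G" "deg (smove G c v y) = deg G" "marks (smove G c v y) = marks G"
    by (simp_all add: smove_def)
  have E: "\<forall>e\<in>edges G. \<exists>u w. u \<noteq> w \<and> e = {u, w} \<and> u \<in> verts G \<and> w \<in> verts G"
    using ig by (simp add: is_graph_def)
  have E': "\<forall>e\<in>edges (smove G c v y). \<exists>u w. u \<noteq> w \<and> e = {u, w} \<and> u \<in> verts G \<and> w \<in> verts G"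
  proof
    fix e assume "e \<in> edges (smove G c v y)"
    then have "e = {c,y} \<or> e \<in> edges G" by (auto simp: smove_def)
    then show "\<exists>u w. u \<noteq> w \<and> e = {u, w} \<and> u \<in> verts G \<and> w \<in> verts G"
      using E c y yc by blast
  qed
  have C: "\<forall>u\<in>verts G. \<forall>w\<in>verts G. (u, w) \<in> (adj G)\<^sup>*"
    using ig by (simp add: is_graph_def)
  have C': "\<forall>u\<in>verts G. \<forall>w\<in>verts G. (u, w) \<in> (adj (smove G c v y))\<^sup>*"
    using C adj_transfer[of G "smove G c v y", OF tr] by blast
  have rest: "finite (verts G)" "verts G \<noteq> {}" "card (edges G) = card (verts G) - 1"
     "set_mset (marks G) \<subseteq> verts G" "\<forall>x\<in>verts G. deg G x = 1"
    using g by (simp_all add: good_tree_def is_graph_def)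
  show ?thesis unfolding good_tree_def is_graph_def V
    using E' C' rest \<open>card (edges (smove G c v y)) = card (edges G)\<close> by simp
qed

lemma smove_conic:
  assumes g: "good_tree G" and cv: "{c,v} \<in> edges G" and vy: "{v,y} \<in> edges G"
    and yc: "y \<noteq> c" and ncy: "{c,y} \<notin> edges G"
  shows "connected_by_conic G (smove G c v y)"
proof (rule conic_move[OF g smove_good[OF assms]])
  have ig: "is_graph G" using g by (simp add: good_tree_def)
  have c: "c \<in> verts G" "c \<noteq> v" "v \<in> verts G" using graph_edge[OF ig cv] by auto
  have y: "y \<in> verts G" "v \<noteq> y" using graph_edge[OF ig vy] by auto
  have ne: "{c,v} \<noteq> {v,y}" using yc c by (metis doubleton_eq_iff)
  show "{c, v} \<in> edges G" by (rule cv)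
  show "{c, v} \<in> edges (smove G c v y)" using cv ne by (simp add: smove_def)
  have H: "edgeH (smove G c v y) c v = edgeH G c v" by (simp add: smove_def edgeH_def)
  have vyc: "c \<noteq> y" "v \<noteq> y" using yc y by auto
  have E1: "{e \<in> edges (smove G c v y). e \<inter> {c,v} = {}} = {e \<in> edges G. e \<inter> {c,v} = {}}"
    by (auto simp: smove_def)
  have E2: "(\<exists>x\<in>{c,v}. {x, u} \<in> edges (smove G c v y)) = (\<exists>x\<in>{c,v}. {x, u} \<in> edges G)"
    if "u \<in> verts G - {c,v}" for u
  proof -
    have 1: "{c,u} \<in> edges (smove G c v y) \<longleftrightarrow> u = y \<or> {c,u} \<in> edges G"
      using c(2) vyc by (auto simp: smove_def doubleton_eq_iff)
    have 2: "{v,u} \<in> edges (smove G c v y) \<longleftrightarrow> u \<noteq> y \<and> {v,u} \<in> edges G"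
      using c(2) vyc by (auto simp: smove_def doubleton_eq_iff)
    show ?thesis using 1 2 vy(1) by auto
  qed
  have E3: "{{c, u} |u. u \<in> verts G - {c,v} \<and> (\<exists>x\<in>{c,v}. {x, u} \<in> edges (smove G c v y))}
      = {{c, u} |u. u \<in> verts G - {c,v} \<and> (\<exists>x\<in>{c,v}. {x, u} \<in> edges G)}"
    using E2 by blast
  have V: "verts (smove G c v y) = verts G" "deg (smove G c v y) = deg G" "marks (smove G c v y) = marks G"
    by (simp_all add: smove_def)
  show "contract G (edgeH G c v) c = contract (smove G c v y) (edgeH (smove G c v y) c v) c"
    unfolding H unfolding contract_def V
    using E1 E3 by (simp add: edgeH_def)
qed

definition mmove :: "'a dgraph \<Rightarrow> 'a \<Rightarrow> 'a \<Rightarrow> 'a dgraph" where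
  "mmove G c x = G\<lparr>marks := add_mset c (marks G - {#x#})\<rparr>"

lemma mmove_good:
  assumes g: "good_tree G" and cx: "{c,x} \<in> edges G"
  shows "good_tree (mmove G c x)"
proof -
  have ig: "is_graph G" using g by (simp add: good_tree_def)
  have c: "c \<in> verts G" using graph_edge[OF ig cx] by auto
  have A: "adj (mmove G c x) = adj G" by (simp add: adj_def mmove_def)
  have M: "set_mset (marks G) \<subseteq> verts G" using ig by (simp add: is_graph_def)
  have M': "set_mset (marks (mmove G c x)) \<subseteq> verts G"
  proof
    fix z assume "z \<in># marks (mmove G c x)"
    then have "z = c \<or> z \<in># marks G" by (auto simp: mmove_def dest: in_diffD)
    then show "z \<in> verts G" using M c by blast
  qed
  have V: "verts (mmove G c x) = verts G" "deg (mmove G c x) = deg G" "edges (mmove G c x) = edges G"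
    by (simp_all add: mmove_def)
  have rest: "finite (verts G)" "verts G \<noteq> {}" "card (edges G) = card (verts G) - 1"
     "\<forall>x\<in>verts G. deg G x = 1"
     "\<forall>e\<in>edges G. \<exists>u w. u \<noteq> w \<and> e = {u, w} \<and> u \<in> verts G \<and> w \<in> verts G"
     "\<forall>u\<in>verts G. \<forall>w\<in>verts G. (u, w) \<in> (adj G)\<^sup>*"
    using g by (simp_all add: good_tree_def is_graph_def)
  show ?thesis unfolding good_tree_def is_graph_def V A
    using M' rest by simp
qed

lemma mmove_conic:
  assumes g: "good_tree G" and cx: "{c,x} \<in> edges G" and xm: "x \<in># marks G"
  shows "connected_by_conic G (mmove G c x)"
proof (rule conic_move[OF g mmove_good[OF assms(1,2)] cx])
  show "{c, x} \<in> edges (mmove G c x)" using cx by (simp add: mmove_def)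
  let ?P = "\<lambda>z. z \<in> {c, x}"
  have xP: "?P x" "?P c" by auto
  have fx: "x \<in># filter_mset ?P (marks G)" using xm by simp
  have "filter_mset ?P (add_mset c (marks G - {#x#})) = add_mset c (filter_mset ?P (marks G) - {#x#})"
    by (simp add: filter_diff_mset)
  then have "size (filter_mset ?P (add_mset c (marks G - {#x#}))) = size (filter_mset ?P (marks G))"
  proof -
    have "size (filter_mset ?P (marks G)) = size (add_mset x (filter_mset ?P (marks G) - {#x#}))"
      using insert_DiffM[OF fx] by simp
    then show ?thesis using \<open>filter_mset ?P (add_mset c (marks G - {#x#})) = _\<close> by simp
  qed
  moreover have "filter_mset (\<lambda>z. \<not> ?P z) (add_mset c (marks G - {#x#})) =
        filter_mset (\<lambda>z. \<not> ?P z) (marks G)"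
  proof -
    have "filter_mset (\<lambda>z. \<not> ?P z) (add_mset c (marks G - {#x#})) = filter_mset (\<lambda>z. \<not> ?P z) (marks G) - filter_mset (\<lambda>z. \<not> ?P z) {#x#}"
      by (simp add: filter_diff_mset)
    then show ?thesis by simp
  qed
  moreover have V: "verts (mmove G c x) = verts G" "deg (mmove G c x) = deg G" "edges (mmove G c x) = edges G"
    "marks (mmove G c x) = add_mset c (marks G - {#x#})"
    by (simp_all add: mmove_def)
  ultimately show "contract G (edgeH G c x) c = contract (mmove G c x) (edgeH (mmove G c x) c x) c"
    unfolding contract_def edgeH_def V by (simp only: dgraph.simps)
qed

definition star :: "'a set \<Rightarrow> 'a \<Rightarrow> nat \<Rightarrow> ('a \<Rightarrow> nat) \<Rightarrow> 'a dgraph" where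
  "star V c k D = \<lparr>verts = V, edges = {{c,x} |x. x \<in> V \<and> x \<noteq> c}, deg = D,
      marks = replicate_mset k c\<rparr>"

definition mu :: "'a dgraph \<Rightarrow> 'a \<Rightarrow> nat" where
  "mu G c = card {x \<in> verts G. x \<noteq> c \<and> {c,x} \<notin> edges G} + size (filter_mset (\<lambda>z. z \<noteq> c) (marks G))"

lemma mu0_star:
  assumes g: "good_tree G" and c: "c \<in> verts G" and m: "mu G c = 0"
  shows "G = star (verts G) c (size (marks G)) (deg G)"
proof -
  have ig: "is_graph G" using g by (simp add: good_tree_def)
  have fv: "finite (verts G)" using ig by (simp add: is_graph_def)
  have A: "{x \<in> verts G. x \<noteq> c \<and> {c,x} \<notin> edges G} = {}" using m fv by (simp add: mu_def)
  have B: "filter_mset (\<lambda>z. z \<noteq> c) (marks G) = {#}" using m by (simp add: mu_def)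
  let ?S = "{{c,x} |x. x \<in> verts G \<and> x \<noteq> c}"
  have S: "?S = (\<lambda>x. {c,x}) ` (verts G - {c})" by auto
  have inj: "inj_on (\<lambda>x. {c,x}) (verts G - {c})" by (auto simp: inj_on_def doubleton_eq_iff)
  have cs: "card ?S = card (verts G) - 1" unfolding S using card_image[OF inj] c fv by simp
  have sub: "?S \<subseteq> edges G" using A by auto
  have "?S = edges G"
    using card_subset_eq[OF graph_edges_finite[OF ig] sub] cs ig by (simp add: is_graph_def)
  moreover have "marks G = replicate_mset (size (marks G)) c"
  proof -
    have "marks G = filter_mset (\<lambda>z. z = c) (marks G)"
      using B by (metis (mono_tags, lifting) add.right_neutral multiset_partition filter_mset_cong)
    also have "\<dots> = replicate_mset (count (marks G) c) c" by (simp add: filter_eq_replicate_mset)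
    finally show ?thesis by (metis size_replicate_mset)
  qed
  ultimately show ?thesis by (simp add: star_def)
qed

lemma to_star:
  "good_tree G \<Longrightarrow> c \<in> verts G \<Longrightarrow>
   connected_by_conic\<^sup>*\<^sup>* G (star (verts G) c (size (marks G)) (deg G))"
proof (induction "mu G c" arbitrary: G rule: less_induct)
  case less
  have g: "good_tree G" and c: "c \<in> verts G" by fact+
  have ig: "is_graph G" using g by (simp add: good_tree_def)
  have fv: "finite (verts G)" using ig by (simp add: is_graph_def)
  show ?case
  proof (cases "mu G c = 0")
    case True
    then show ?thesis using mu0_star[OF g c] by (metis rtranclp.rtrancl_refl)
  next
    case False
    show ?thesis
    proof (cases "\<exists>x\<in>verts G. x \<noteq> c \<and> {c,x} \<notin> edges G")
      case True
      then obtain x where x: "x \<in> verts G" "x \<noteq> c" "{c,x} \<notin> edges G" by blast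
      have "(c,x) \<in> (adj G)\<^sup>*" using ig c x unfolding is_graph_def by blast
      from rtrancl_cross[OF this, of "\<lambda>z. z = c \<or> {c,z} \<in> edges G"] x
      obtain v y where vy: "{v,y} \<in> edges G" "v = c \<or> {c,v} \<in> edges G" "y \<noteq> c" "{c,y} \<notin> edges G"
        by auto
      have cv: "{c,v} \<in> edges G" using vy by auto
      let ?G' = "smove G c v y"
      have g': "good_tree ?G'" using smove_good[OF g cv vy(1,3,4)] .
      have st: "star (verts ?G') c (size (marks ?G')) (deg ?G') = star (verts G) c (size (marks G)) (deg G)"
        by (simp add: smove_def)
      have y: "y \<in> verts G" using graph_edge[OF ig vy(1)] by auto
      have ne: "{c,v} \<noteq> {v,y}" using vy(3) graph_edge[OF ig cv] by (metis doubleton_eq_iff)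
      have set: "{z \<in> verts ?G'. z \<noteq> c \<and> {c,z} \<notin> edges ?G'} = {z \<in> verts G. z \<noteq> c \<and> {c,z} \<notin> edges G} - {y}"
        using vy(3) graph_edge[OF ig cv] by (auto simp: smove_def doubleton_eq_iff)
      have "card {z \<in> verts ?G'. z \<noteq> c \<and> {c,z} \<notin> edges ?G'} < card {z \<in> verts G. z \<noteq> c \<and> {c,z} \<notin> edges G}"
        unfolding set using fv y vy by (intro card_Diff1_less) auto
      then have "mu ?G' c < mu G c" by (simp add: mu_def smove_def)
      from less(1)[OF this g'] c have "connected_by_conic\<^sup>*\<^sup>* ?G' (star (verts G) c (size (marks G)) (deg G))"
        using st by (simp add: smove_def)
      then show ?thesis using smove_conic[OF g cv vy(1,3,4)]
        by (meson converse_rtranclp_into_rtranclp)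
    next
      case False2: False
      have emp: "{x\<in>verts G. x \<noteq> c \<and> {c,x} \<notin> edges G} = {}" using False2 by blast
      have "filter_mset (\<lambda>z. z \<noteq> c) (marks G) \<noteq> {#}" using False unfolding mu_def emp by simp
      then obtain x where "x \<in># filter_mset (\<lambda>z. z \<noteq> c) (marks G)" by (meson multiset_nonemptyE)
      then have x: "x \<in># marks G" "x \<noteq> c" by simp_all
      have xv: "x \<in> verts G" using x ig by (auto simp: is_graph_def)
      have cx: "{c,x} \<in> edges G" using False2 xv x by blast
      let ?G' = "mmove G c x"
      have g': "good_tree ?G'" using mmove_good[OF g cx] .
      have "size (marks G) = size (add_mset x (marks G - {#x#}))" using insert_DiffM[OF x(1)] by simp
      then have "size (marks ?G') = size (marks G)" by (simp add: mmove_def)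
      then have st: "star (verts ?G') c (size (marks ?G')) (deg ?G') = star (verts G) c (size (marks G)) (deg G)"
        by (simp add: mmove_def)
      have "size (filter_mset (\<lambda>z. z \<noteq> c) (marks ?G')) < size (filter_mset (\<lambda>z. z \<noteq> c) (marks G))"
      proof -
        let ?F = "filter_mset (\<lambda>z. z \<noteq> c) (marks G)"
        have fx: "x \<in># ?F" using x by simp
        have "filter_mset (\<lambda>z. z \<noteq> c) (marks ?G') = ?F - {#x#}"
          using x by (simp add: mmove_def filter_diff_mset)
        moreover have "size ?F = size (add_mset x (?F - {#x#}))" using insert_DiffM[OF fx] by simp
        ultimately show ?thesis by simp
      qed
      then have "mu ?G' c < mu G c" by (simp add: mu_def mmove_def)
      from less(1)[OF this g'] c have "connected_by_conic\<^sup>*\<^sup>* ?G' (star (verts G) c (size (marks G)) (deg G))"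
        using st by (simp add: mmove_def)
      then show ?thesis using mmove_conic[OF g cx x(1)]
        by (meson converse_rtranclp_into_rtranclp)
    qed
  qed
qed

lemma graph_edges_Pow: "is_graph G \<Longrightarrow> edges G \<subseteq> Pow (verts G)"
proof
  fix e assume g: "is_graph G" and "e \<in> edges G"
  have E: "\<forall>e\<in>edges G. \<exists>u v. u \<noteq> v \<and> e = {u, v} \<and> u \<in> verts G \<and> v \<in> verts G"
    using g by (simp add: is_graph_def)
  obtain u v where "e = {u,v}" "u \<in> verts G" "v \<in> verts G" using E \<open>e \<in> edges G\<close> by blast
  then show "e \<in> Pow (verts G)" by simp
qed

definition transp :: "('a \<Rightarrow> 'a) \<Rightarrow> 'a set \<Rightarrow> ('a \<Rightarrow> nat) \<Rightarrow> 'a dgraph \<Rightarrow> 'a dgraph" where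
  "transp g V D G = \<lparr>verts = V, edges = image g ` edges G, deg = D, marks = image_mset g (marks G)\<rparr>"

lemma transp_adj:
  assumes "(a,b) \<in> (adj G)\<^sup>*"
  shows "(g a, g b) \<in> (adj (transp g V D G))\<^sup>*"
  using assms
proof (induction rule: rtrancl_induct)
  case base then show ?case by simp
next
  case (step b d)
  have "{b,d} \<in> edges G" using step(2) by simp
  then have "g ` {b,d} \<in> edges (transp g V D G)"
    using imageI[of "{b,d}" "edges G" "image g"] by (simp only: transp_def dgraph.simps)
  then have "(g b, g d) \<in> adj (transp g V D G)" by simp
  then show ?case using step(3) by (meson rtrancl.rtrancl_into_rtrancl)
qed

lemma transp_good:
  assumes g: "good_tree G" and b: "bij_betw g (verts G) V" and D: "\<forall>v\<in>V. D v = 1"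
  shows "good_tree (transp g V D G)" "dgraph_iso (transp g V D G) G"
proof -
  let ?T = "transp g V D G"
  let ?f = "inv_into (verts G) g"
  have ig: "is_graph G" using g by (simp add: good_tree_def)
  have inj: "inj_on g (verts G)" and im: "g ` verts G = V" using b by (auto simp: bij_betw_def)
  have P: "edges G \<subseteq> Pow (verts G)" by (rule graph_edges_Pow[OF ig])
  have rest: "finite (verts G)" "verts G \<noteq> {}" "card (edges G) = card (verts G) - 1"
     "set_mset (marks G) \<subseteq> verts G" "\<forall>x\<in>verts G. deg G x = 1"
     "\<forall>u\<in>verts G. \<forall>w\<in>verts G. (u, w) \<in> (adj G)\<^sup>*"
    using g by (simp_all add: good_tree_def is_graph_def)
  have V: "verts ?T = V" "edges ?T = image g ` edges G" "deg ?T = D" "marks ?T = image_mset g (marks G)"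
    by (simp_all add: transp_def)
  have 1: "finite V" "V \<noteq> {}" using rest im by auto
  have 2: "\<forall>e\<in>edges ?T. \<exists>u w. u \<noteq> w \<and> e = {u, w} \<and> u \<in> V \<and> w \<in> V"
  proof
    fix e assume "e \<in> edges ?T"
    then obtain e0 where e0: "e0 \<in> edges G" "e = g ` e0" by (auto simp: V)
    obtain a b where ab: "e0 = {a,b}" "a \<in> verts G" "b \<in> verts G" "a \<noteq> b"
      using ig e0(1) unfolding is_graph_def by blast
    have "g a \<noteq> g b" using inj ab by (meson inj_on_contraD)
    then show "\<exists>u w. u \<noteq> w \<and> e = {u, w} \<and> u \<in> V \<and> w \<in> V"
      using e0 ab im by auto
  qed
  have 3: "\<forall>u\<in>V. \<forall>w\<in>V. (u, w) \<in> (adj ?T)\<^sup>*"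
  proof (intro ballI)
    fix u w assume u: "u \<in> V" and w: "w \<in> V"
    have "?f u \<in> verts G" "?f w \<in> verts G" using u w im by (auto intro: inv_into_into)
    then have "(?f u, ?f w) \<in> (adj G)\<^sup>*" using rest(6) by blast
    from transp_adj[OF this, of g V D]
    show "(u, w) \<in> (adj ?T)\<^sup>*" using u w im by (simp add: f_inv_into_f)
  qed
  have "inj_on (image g) (edges G)" using inj_on_subset[OF inj_on_image_Pow[OF inj] P] .
  then have 4: "card (edges ?T) = card V - 1"
    using card_image rest(3) bij_betw_same_card[OF b] by (metis V(2))
  have 5: "set_mset (marks ?T) \<subseteq> V" using rest(4) im by (auto simp: V)
  show "good_tree ?T" unfolding good_tree_def is_graph_def V(1,3)
    using 1 2 3 4 5 D by (simp add: V)
  have bf: "bij_betw ?f V (verts G)" using bij_betw_inv_into[OF b] .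
  have ed: "{u, w} \<in> edges ?T \<longleftrightarrow> {?f u, ?f w} \<in> edges G" if u: "u \<in> V" and w: "w \<in> V" for u w
  proof
    assume "{u, w} \<in> edges ?T"
    then obtain e0 where e0: "e0 \<in> edges G" "{u,w} = g ` e0" by (auto simp: V)
    have "e0 \<subseteq> verts G" using e0 P by blast
    then have "?f ` g ` e0 = e0" using inv_into_image_cancel[OF inj] by blast
    moreover have "?f ` {u,w} = ?f ` (g ` e0)" using e0(2) by (rule arg_cong)
    ultimately have "?f ` {u,w} = e0" by simp
    then have "{?f u, ?f w} = e0" by (simp only: image_insert image_empty)
    with e0(1) show "{?f u, ?f w} \<in> edges G" by simp
  next
    assume "{?f u, ?f w} \<in> edges G"
    then have "g ` {?f u, ?f w} \<in> edges ?T"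
      using imageI[of "{?f u, ?f w}" "edges G" "image g"] by (simp only: V)
    then show "{u, w} \<in> edges ?T" using u w im by (simp add: f_inv_into_f)
  qed
  have dg: "\<forall>v\<in>V. deg G (?f v) = D v"
    using D rest(5) bf by (simp add: bij_betw_def image_iff) (metis bij_betw_apply bf)
  have "image_mset ?f (image_mset g (marks G)) = image_mset id (marks G)"
    unfolding image_mset.compositionality
    by (rule image_mset_cong) (use rest(4) inj in auto)
  then have mk: "marks G = image_mset ?f (marks ?T)" by (simp add: V)
  show "dgraph_iso ?T G" unfolding dgraph_iso_def V(1)
    using bf ed dg mk by (simp add: V) blast
qed

lemma conic_sym: "connected_by_conic a b \<Longrightarrow> connected_by_conic b a"
  unfolding connected_by_conic_def by blast

lemma conic_good: "connected_by_conic a b \<Longrightarrow> good_tree a \<and> good_tree b"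
  unfolding connected_by_conic_def conic_deformation_def by blast

lemma rt_sym: "connected_by_conic\<^sup>*\<^sup>* a b \<Longrightarrow> connected_by_conic\<^sup>*\<^sup>* b a"
proof (induction rule: rtranclp_induct)
  case base then show ?case by simp
next
  case (step b d) then show ?case using converse_rtranclp_into_rtranclp[OF conic_sym[OF step(2)] step.IH] by simp
qed

theorem lemma5p4:
  fixes G1 G2 :: "'a dgraph" and e k :: nat
  assumes "good_tree G1" and "good_tree G2"
    and "card (verts G1) = e" and "card (verts G2) = e"
    and "size (marks G1) = k" and "size (marks G2) = k"
  shows "\<exists>(T :: nat \<Rightarrow> 'a dgraph) m. T 0 = G1 \<and> dgraph_iso (T m) G2 \<and>
           (\<forall>j\<le>m. good_tree (T j)) \<and>
           (\<forall>j<m. connected_by_conic (T j) (T (Suc j)))"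
proof -
  have r1: "finite (verts G1)" "verts G1 \<noteq> {}" "\<forall>x\<in>verts G1. deg G1 x = 1"
    using assms(1) by (simp_all add: good_tree_def is_graph_def)
  have r2: "finite (verts G2)" using assms(2) by (simp add: good_tree_def is_graph_def)
  obtain c where c: "c \<in> verts G1" using r1(2) by blast
  obtain g where g: "bij_betw g (verts G2) (verts G1)"
    using finite_same_card_bij[OF r2 r1(1)] assms(3,4) by presburger
  let ?G = "transp g (verts G1) (deg G1) G2"
  have gg: "good_tree ?G" "dgraph_iso ?G G2" using transp_good[OF assms(2) g r1(3)] by auto
  have Gf: "verts ?G = verts G1" "deg ?G = deg G1" "size (marks ?G) = k"
    using assms(6) by (simp_all add: transp_def)
  have a: "connected_by_conic\<^sup>*\<^sup>* G1 (star (verts G1) c k (deg G1))"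
    using to_star[OF assms(1) c] assms(5) by simp
  have b: "connected_by_conic\<^sup>*\<^sup>* ?G (star (verts G1) c k (deg G1))"
    using to_star[OF gg(1), of c] c Gf by simp
  have "connected_by_conic\<^sup>*\<^sup>* G1 ?G" by (rule rtranclp_trans[OF a rt_sym[OF b]])
  from rtranclp_imp_relpowp[OF this] obtain n where "(connected_by_conic ^^ n) G1 ?G" ..
  then have "\<exists>f. f 0 = G1 \<and> f n = ?G \<and> (\<forall>i<n. connected_by_conic (f i) (f (Suc i)))"
    by (simp only: relpowp_fun_conv)
  then obtain T where T: "T 0 = G1" "T n = ?G" "\<forall>i<n. connected_by_conic (T i) (T (Suc i))"
    by (elim exE conjE) (intro that)
  have "\<forall>j\<le>n. good_tree (T j)"
  proof (intro allI impI)
    fix j assume "j \<le> n"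
    then consider "j < n" | "j = n" by linarith
    then show "good_tree (T j)"
    proof cases
      case 1 then show ?thesis using conic_good[OF T(3)[rule_format, OF 1]] by simp
    next
      case 2 then show ?thesis using T(2) gg(1) by simp
    qed
  qed
  then show ?thesis
    using T gg(2) by (intro exI[of _ T] exI[of _ n] conjI) auto
qed

end
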